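(* If $X$ is a connected weighted bipartite graph whose adjacency matrix $A(X)$ is nonsingular, then no vertex of $X$ is sedentary.
   Context: Graphs are simple, connected, undirected, with nonzero real edge weights; $A(X)$ is the weighted adjacency matrix and $U(t)=e^{itA(X)}$. A vertex $u$ is sedentary if $\inf_{t>0}|U(t)_{u,u}|\ge C$ for some $0<C\le1$, and not sedentary if this infimum is $0$. *)

theory Defs
  imports "HOL-Analysis.Analysis"
begin

text \<open>Weighted graphs on a finite vertex type 'n, given by a real weight matrix W:
  vertices i and j are adjacent iff W i j is nonzero (the edge weight).\<close>

definition weighted_simple_graph :: "real^'n^'n \<Rightarrow> bool" where
  "weighted_simple_graph W \<longleftrightarrow> (\<forall>i j. W $ i $ j = W $ j $ i) \<and> (\<forall>i. W $ i $ i = 0)"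

definition adj :: "real^'n^'n \<Rightarrow> 'n \<Rightarrow> 'n \<Rightarrow> bool" where
  "adj W i j \<longleftrightarrow> W $ i $ j \<noteq> 0"

definition graph_connected :: "real^'n^'n \<Rightarrow> bool" where
  "graph_connected W \<longleftrightarrow> (\<forall>u v. (adj W)\<^sup>*\<^sup>* u v)"

definition graph_bipartite :: "real^'n^'n \<Rightarrow> bool" where
  "graph_bipartite W \<longleftrightarrow> (\<exists>S :: 'n set. \<forall>i j. adj W i j \<longrightarrow> (i \<in> S \<longleftrightarrow> j \<notin> S))"

text \<open>Matrix powers and the transition matrix U(t) = exp(i t A), as its entrywise power series.\<close>

fun mat_pow :: "'a::comm_ring_1^'n^'n \<Rightarrow> nat \<Rightarrow> 'a^'n^'n" where
  "mat_pow A 0 = mat 1"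
| "mat_pow A (Suc k) = A ** mat_pow A k"

definition cmat :: "real^'n^'n \<Rightarrow> complex^'n^'n" where
  "cmat A = (\<chi> i j. complex_of_real (A $ i $ j))"

definition transition :: "real^'n^'n \<Rightarrow> real \<Rightarrow> complex^'n^'n" where
  "transition A t = (\<chi> i j. \<Sum>k. (\<i> * complex_of_real t) ^ k / fact k * (mat_pow (cmat A) k $ i $ j))"

definition sedentary :: "real^'n^'n \<Rightarrow> 'n \<Rightarrow> bool" where
  "sedentary A u \<longleftrightarrow> (\<exists>C. 0 < C \<and> C \<le> 1 \<and> (INF t\<in>{0<..}. cmod (transition A t $ u $ u)) \<ge> C)"

end

theory Submission
  imports Defs
begin


definition cc :: "real^'n^'n \<Rightarrow> 'n \<Rightarrow> nat \<Rightarrow> 'n \<Rightarrow> real" where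
  "cc A u k v = mat_pow A k $ v $ u"
definition px :: "nat \<Rightarrow> real" where "px k = Re (\<i>^k) / fact k"
definition py :: "nat \<Rightarrow> real" where "py k = Im (\<i>^k) / fact k"
definition Ser :: "(nat \<Rightarrow> real) \<Rightarrow> real^'n^'n \<Rightarrow> 'n \<Rightarrow> 'n \<Rightarrow> real \<Rightarrow> real" where
  "Ser a A u v t = (\<Sum>k. (a k * cc A u k v) * t^k)"

lemma mat_pow_bound:
  fixes A :: "real^'n^'n"
  defines "N \<equiv> (\<Sum>i\<in>UNIV. \<Sum>j\<in>UNIV. \<bar>A$i$j\<bar>)"
  shows "\<bar>mat_pow A k $ v $ w\<bar> \<le> N^k"
proof (induction k arbitrary: v w)
  case 0
  then show ?case by (simp add: mat_def)
next
  case (Suc k)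
  have N0: "N \<ge> 0" unfolding N_def by (simp add: sum_nonneg)
  have row: "(\<Sum>z\<in>UNIV. \<bar>A$v$z\<bar>) \<le> N" unfolding N_def
    by (rule member_le_sum[where f="\<lambda>i. \<Sum>j\<in>UNIV. \<bar>A$i$j\<bar>"]) (auto simp: sum_nonneg)
  have "\<bar>mat_pow A (Suc k) $ v $ w\<bar> = \<bar>\<Sum>z\<in>UNIV. A$v$z * mat_pow A k $ z $ w\<bar>"
    by (simp add: matrix_matrix_mult_def)
  also have "\<dots> \<le> (\<Sum>z\<in>UNIV. \<bar>A$v$z\<bar> * N^k)"
    by (rule order_trans[OF sum_abs]) (auto intro!: sum_mono mult_left_mono Suc simp: abs_mult)
  also have "\<dots> = (\<Sum>z\<in>UNIV. \<bar>A$v$z\<bar>) * N^k" by (simp add: sum_distrib_right)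
  also have "\<dots> \<le> N * N^k" using row N0 by (intro mult_right_mono) auto
  finally show ?case by simp
qed

lemma Ser_summable:
  assumes a: "\<And>k. \<bar>a k\<bar> \<le> 1 / fact k"
  shows "summable (\<lambda>k. (a k * cc A u k v) * t^k)"
proof -
  define N where "N = (\<Sum>i\<in>UNIV. \<Sum>j\<in>UNIV. \<bar>A$i$j\<bar>)"
  have N0: "N \<ge> 0" unfolding N_def by (simp add: sum_nonneg)
  show ?thesis
  proof (rule summable_comparison_test)
    show "summable (\<lambda>k. inverse (fact k) * (N * \<bar>t\<bar>)^k)" by (rule summable_exp)
    show "\<exists>M. \<forall>n\<ge>M. norm ((a n * cc A u n v) * t^n) \<le> inverse (fact n) * (N * \<bar>t\<bar>)^n"
    proof (intro exI allI impI)
      fix n :: nat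
      have "norm ((a n * cc A u n v) * t^n) = \<bar>a n\<bar> * \<bar>cc A u n v\<bar> * \<bar>t\<bar>^n"
        by (simp add: abs_mult power_abs)
      also have "\<dots> \<le> (1 / fact n) * N^n * \<bar>t\<bar>^n"
        using a[of n] mat_pow_bound[of A n v u] unfolding cc_def N_def
        by (intro mult_right_mono mult_mono) auto
      also have "\<dots> = inverse (fact n) * (N * \<bar>t\<bar>)^n" by (simp add: power_mult_distrib divide_inverse)
      finally show "norm ((a n * cc A u n v) * t^n) \<le> inverse (fact n) * (N * \<bar>t\<bar>)^n" .
    qed
  qed
qed

lemma px_bound: "\<bar>px k\<bar> \<le> 1 / fact k"
  unfolding px_def using abs_Re_le_cmod[of "\<i>^k"] by (simp add: norm_power divide_right_mono)
lemma py_bound: "\<bar>py k\<bar> \<le> 1 / fact k"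
  unfolding py_def using abs_Im_le_cmod[of "\<i>^k"] by (simp add: norm_power divide_right_mono)

lemma cc_Suc: "cc A u (Suc k) v = (\<Sum>w\<in>UNIV. A$v$w * cc A u k w)"
  by (simp add: cc_def matrix_matrix_mult_def)

lemma diffs_px: "diffs (\<lambda>k. px k * cc A u k v) k = - (\<Sum>w\<in>UNIV. A$v$w * (py k * cc A u k w))"
  unfolding diffs_def px_def py_def cc_Suc
  by (simp add: sum_distrib_left sum_negf field_simps del: of_nat_Suc)

lemma diffs_py: "diffs (\<lambda>k. py k * cc A u k v) k = (\<Sum>w\<in>UNIV. A$v$w * (px k * cc A u k w))"
  unfolding diffs_def px_def py_def cc_Suc
  by (simp add: sum_distrib_left field_simps del: of_nat_Suc)


lemma suminf_rewrite:
  assumes "\<And>w. summable (\<lambda>k. (b k * cc A u k w) * t^k)"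
  shows "(\<Sum>k. (\<Sum>w\<in>UNIV. A$v$w * (b k * cc A u k w)) * t^k) = (\<Sum>w\<in>UNIV. A$v$w * Ser b A u w t)"
proof -
  have "(\<Sum>k. (\<Sum>w\<in>UNIV. A$v$w * (b k * cc A u k w)) * t^k)
      = (\<Sum>k. \<Sum>w\<in>UNIV. A$v$w * ((b k * cc A u k w) * t^k))"
    by (simp add: sum_distrib_right mult.assoc)
  also have "\<dots> = (\<Sum>w\<in>UNIV. \<Sum>k. A$v$w * ((b k * cc A u k w) * t^k))"
    by (rule suminf_sum) (auto intro: summable_mult assms)
  also have "\<dots> = (\<Sum>w\<in>UNIV. A$v$w * Ser b A u w t)"
    unfolding Ser_def by (intro sum.cong refl) (simp add: suminf_mult assms)
  finally show ?thesis .
qed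

lemma Ser_px_deriv:
  "(Ser px A u v has_field_derivative (- (\<Sum>w\<in>UNIV. A$v$w * Ser py A u w t))) (at t)"
proof -
  have "((\<lambda>x. \<Sum>k. (px k * cc A u k v) * x^k) has_field_derivative
        (\<Sum>k. diffs (\<lambda>k. px k * cc A u k v) k * t^k)) (at t)"
    by (rule termdiffs_strong_converges_everywhere) (rule Ser_summable[OF px_bound])
  also have "(\<Sum>k. diffs (\<lambda>k. px k * cc A u k v) k * t^k)
     = (\<Sum>k. - ((\<Sum>w\<in>UNIV. A$v$w * (py k * cc A u k w)) * t^k))"
    by (simp add: diffs_px)
  also have "\<dots> = - (\<Sum>k. (\<Sum>w\<in>UNIV. A$v$w * (py k * cc A u k w)) * t^k)"
    using Ser_summable[OF py_bound, of A u _ t]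
    by (intro suminf_minus) (auto intro!: summable_sum summable_mult
           simp: sum_distrib_right mult.assoc)
  also have "\<dots> = - (\<Sum>w\<in>UNIV. A$v$w * Ser py A u w t)"
    by (subst suminf_rewrite) (auto intro: Ser_summable[OF py_bound])
  finally show ?thesis unfolding Ser_def[abs_def] .
qed

lemma Ser_py_deriv:
  "(Ser py A u v has_field_derivative (\<Sum>w\<in>UNIV. A$v$w * Ser px A u w t)) (at t)"
proof -
  have "((\<lambda>x. \<Sum>k. (py k * cc A u k v) * x^k) has_field_derivative
        (\<Sum>k. diffs (\<lambda>k. py k * cc A u k v) k * t^k)) (at t)"
    by (rule termdiffs_strong_converges_everywhere) (rule Ser_summable[OF py_bound])
  also have "(\<Sum>k. diffs (\<lambda>k. py k * cc A u k v) k * t^k)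
     = (\<Sum>k. (\<Sum>w\<in>UNIV. A$v$w * (px k * cc A u k w)) * t^k)"
    by (simp add: diffs_py)
  also have "\<dots> = (\<Sum>w\<in>UNIV. A$v$w * Ser px A u w t)"
    by (subst suminf_rewrite) (auto intro: Ser_summable[OF px_bound])
  finally show ?thesis unfolding Ser_def[abs_def] .
qed

lemma Ser_zero: "Ser a A u v 0 = a 0 * (if v = u then 1 else 0)"
  unfolding Ser_def by (simp add: cc_def mat_def)



lemma energy_const:
  fixes A :: "real^'n^'n"
  assumes sym: "\<And>i j. A$i$j = A$j$i"
  shows "(\<Sum>v\<in>UNIV. (Ser px A u v t)^2 + (Ser py A u v t)^2) = 1"
proof -
  define En where "En t = (\<Sum>v\<in>UNIV. (Ser px A u v t)^2 + (Ser py A u v t)^2)" for t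
  have d: "(En has_field_derivative 0) (at s)" for s
  proof -
    let ?X = "\<lambda>v. Ser px A u v s" and ?Y = "\<lambda>v. Ser py A u v s"
    have "(En has_field_derivative
       (\<Sum>v\<in>UNIV. 2 * ?X v * (- (\<Sum>w\<in>UNIV. A$v$w * ?Y w)) + 2 * ?Y v * (\<Sum>w\<in>UNIV. A$v$w * ?X w))) (at s)"
      unfolding En_def[abs_def]
    proof (intro DERIV_sum)
      fix v :: 'n
      have dx: "((\<lambda>t. (Ser px A u v t)^2) has_field_derivative (2 * ?X v * (- (\<Sum>w\<in>UNIV. A$v$w * ?Y w)))) (at s)"
        using DERIV_power[OF Ser_px_deriv[of A u v s], where n=2] by (simp add: mult_ac)
      have dy: "((\<lambda>t. (Ser py A u v t)^2) has_field_derivative (2 * ?Y v * ((\<Sum>w\<in>UNIV. A$v$w * ?X w)))) (at s)"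
        using DERIV_power[OF Ser_py_deriv[of A u v s], where n=2] by (simp add: mult_ac)
      show "((\<lambda>t. (Ser px A u v t)^2 + (Ser py A u v t)^2) has_field_derivative
         (2 * ?X v * (- (\<Sum>w\<in>UNIV. A$v$w * ?Y w)) + 2 * ?Y v * (\<Sum>w\<in>UNIV. A$v$w * ?X w))) (at s)"
        using DERIV_add[OF dx dy] by simp
    qed
    moreover have "(\<Sum>v\<in>UNIV. 2 * ?X v * (- (\<Sum>w\<in>UNIV. A$v$w * ?Y w)) + 2 * ?Y v * (\<Sum>w\<in>UNIV. A$v$w * ?X w)) = 0"
    proof -
      have "(\<Sum>v\<in>UNIV. ?Y v * (\<Sum>w\<in>UNIV. A$v$w * ?X w)) = (\<Sum>v\<in>UNIV. \<Sum>w\<in>UNIV. ?Y v * A$v$w * ?X w)"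
        by (simp add: sum_distrib_left mult.assoc)
      also have "\<dots> = (\<Sum>w\<in>UNIV. \<Sum>v\<in>UNIV. ?Y v * A$v$w * ?X w)" by (rule sum.swap)
      also have "\<dots> = (\<Sum>w\<in>UNIV. \<Sum>v\<in>UNIV. ?X w * A$w$v * ?Y v)"
        by (intro sum.cong refl) (subst sym, simp add: mult_ac)
      also have "\<dots> = (\<Sum>w\<in>UNIV. ?X w * (\<Sum>v\<in>UNIV. A$w$v * ?Y v))"
        by (simp add: sum_distrib_left mult.assoc)
      finally have "(\<Sum>v\<in>UNIV. ?Y v * (\<Sum>w\<in>UNIV. A$v$w * ?X w)) = (\<Sum>w\<in>UNIV. ?X w * (\<Sum>v\<in>UNIV. A$w$v * ?Y v))" .
      then show ?thesis by (simp add: sum_subtractf mult.assoc flip: sum_distrib_left)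
    qed
    ultimately show ?thesis by simp
  qed
  have "En t = En 0" by (rule DERIV_isconst_all) (use d in auto)
  also have "En 0 = 1" proof -
    have "\<And>v. (Ser px A u v 0)^2 + (Ser py A u v 0)^2 = (if v = u then 1 else 0)"
      unfolding Ser_zero by (simp add: px_def py_def)
    then show ?thesis unfolding En_def by simp
  qed
  finally show ?thesis unfolding En_def .
qed
lemma Ser_px_le1:
  fixes A :: "real^'n^'n"
  assumes sym: "\<And>i j. A$i$j = A$j$i"
  shows "\<bar>Ser px A u v t\<bar> \<le> 1"
proof -
  have "(Ser px A u v t)^2 \<le> (Ser px A u v t)^2 + (Ser py A u v t)^2" by simp
  also have "\<dots> \<le> (\<Sum>v\<in>UNIV. (Ser px A u v t)^2 + (Ser py A u v t)^2)"
    by (rule member_le_sum[where f="\<lambda>v. (Ser px A u v t)^2 + (Ser py A u v t)^2"]) auto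
  also have "\<dots> = 1" by (rule energy_const[OF sym])
  finally show ?thesis by (simp add: abs_square_le_1)
qed

lemma cmat_mult: "cmat (A ** B) = cmat A ** cmat B"
  by (simp add: cmat_def matrix_matrix_mult_def vec_eq_iff)

lemma mat_pow_cmat: "mat_pow (cmat A) k = cmat (mat_pow A k)"
proof (induction k)
  case 0 then show ?case by (simp add: cmat_def mat_def vec_eq_iff)
next
  case (Suc k) then show ?case by (simp add: cmat_mult)
qed


lemma Re_mult_ofr: "Re (z * complex_of_real r) = Re z * r" by simp
lemma Im_mult_ofr: "Im (z * complex_of_real r) = Im z * r" by simp

lemma transition_eq: "transition A t $ v $ u = Complex (Ser px A u v t) (Ser py A u v t)"
proof -
  let ?f = "\<lambda>k. (\<i> * complex_of_real t) ^ k / fact k * (mat_pow (cmat A) k $ v $ u)"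
  have fe: "?f k = \<i>^k * of_real (t^k * cc A u k v / fact k)" for k
    unfolding mat_pow_cmat by (simp add: cmat_def cc_def power_mult_distrib)
  have re: "Re (?f k) = (px k * cc A u k v) * t^k" for k
    unfolding fe px_def Re_mult_ofr by simp
  have im: "Im (?f k) = (py k * cc A u k v) * t^k" for k
    unfolding fe py_def Im_mult_ofr by simp
  have "?f sums Complex (Ser px A u v t) (Ser py A u v t)"
    unfolding sums_complex_iff re im complex.sel Ser_def
    by (intro conjI summable_sums Ser_summable px_bound py_bound)
  then show ?thesis unfolding transition_def by (simp add: sums_unique[symmetric])
qed


lemma bip_odd:
  fixes A :: "real^'n^'n"
  assumes S: "\<forall>i j. adj A i j \<longrightarrow> (i \<in> S \<longleftrightarrow> j \<notin> S)"
  shows "odd k \<Longrightarrow> mat_pow A k $ v $ v = 0"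
proof -
  define s where "s i = (if i \<in> S then 1 else -1 :: real)" for i
  have s2: "s i * s i = 1" for i by (simp add: s_def)
  have A1: "s i * s j * A$i$j = - A$i$j" for i j
    using S unfolding adj_def s_def by (cases "A$i$j = 0") auto
  have P: "s i * s j * mat_pow A k $ i $ j = (-1)^k * mat_pow A k $ i $ j" for i j
  proof (induction k arbitrary: i j)
    case 0 then show ?case by (simp add: mat_def s2)
  next
    case (Suc k)
    have "s i * s j * mat_pow A (Suc k) $ i $ j = (\<Sum>z\<in>UNIV. (s i * s z * A$i$z) * (s z * s j * mat_pow A k $ z $ j))"
    proof -
      have key: "x*y*(a*b) = (x*z*a)*(z*y*b)" if "z*z=1" for x y z a b :: real
      proof -
        have "(x*z*a)*(z*y*b) = x*y*(a*b)*(z*z)" by (simp add: mult_ac)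
        then show ?thesis using that by simp
      qed
      show ?thesis unfolding mat_pow.simps matrix_matrix_mult_def
        by (simp add: sum_distrib_left) (intro sum.cong refl key s2)
    qed
    also have "\<dots> = (\<Sum>z\<in>UNIV. (- A$i$z) * ((-1)^k * mat_pow A k $ z $ j))"
      by (simp add: A1 Suc)
    also have "\<dots> = (-1)^Suc k * mat_pow A (Suc k) $ i $ j"
      by (simp add: matrix_matrix_mult_def sum_distrib_left mult_ac sum_negf)
    finally show ?case .
  qed
  assume "odd k"
  then show ?thesis using P[of v v] s2[of v] by simp
qed



lemma sum_swap_mat:
  fixes M A :: "real^'n^'n"
  shows "(\<Sum>v\<in>UNIV. M$u$v * (\<Sum>w\<in>UNIV. A$v$w * Z w)) = (\<Sum>w\<in>UNIV. (M ** A)$u$w * Z w)"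
proof -
  have "(\<Sum>v\<in>UNIV. M$u$v * (\<Sum>w\<in>UNIV. A$v$w * Z w)) = (\<Sum>v\<in>UNIV. \<Sum>w\<in>UNIV. M$u$v * A$v$w * Z w)"
    by (simp add: sum_distrib_left mult.assoc)
  also have "\<dots> = (\<Sum>w\<in>UNIV. \<Sum>v\<in>UNIV. M$u$v * A$v$w * Z w)" by (rule sum.swap)
  also have "\<dots> = (\<Sum>w\<in>UNIV. (M ** A)$u$w * Z w)"
    by (simp add: matrix_matrix_mult_def sum_distrib_right)
  finally show ?thesis .
qed

lemma py_even: "even k \<Longrightarrow> py k = 0"
proof -
  assume "even k"
  then have "\<i>^k = complex_of_real ((-1)^(k div 2))" by simp
  then show ?thesis unfolding py_def by simp
qed

theorem corollary13:
  fixes A :: "real^'n^'n"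
  assumes "weighted_simple_graph A"
    and "graph_connected A"
    and "graph_bipartite A"
    and "det A \<noteq> 0"
  shows "\<forall>u. \<not> sedentary A u"
proof (intro allI notI)
  fix u assume sed: "sedentary A u"
  from assms(1) have sym: "\<And>i j. A$i$j = A$j$i" by (simp add: weighted_simple_graph_def)
  from assms(3) obtain S where S: "\<forall>i j. adj A i j \<longrightarrow> (i \<in> S \<longleftrightarrow> j \<notin> S)"
    unfolding graph_bipartite_def by blast
  define X where "X v t = Ser px A u v t" for v t
  define Y where "Y v t = Ser py A u v t" for v t
  have dX: "(X v has_field_derivative - (\<Sum>w\<in>UNIV. A$v$w * Y w t)) (at t)" for v t
    unfolding X_def[abs_def] Y_def by (rule Ser_px_deriv)
  have dY: "(Y v has_field_derivative (\<Sum>w\<in>UNIV. A$v$w * X w t)) (at t)" for v t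
    unfolding Y_def[abs_def] X_def by (rule Ser_py_deriv)
  have X1: "\<bar>X v t\<bar> \<le> 1" for v t unfolding X_def by (rule Ser_px_le1[OF sym])
  have X0: "X v 0 = (if v = u then 1 else 0)" for v unfolding X_def Ser_zero by (simp add: px_def)
  have Y0: "Y v 0 = 0" for v unfolding Y_def Ser_zero by (simp add: py_def)
  have Yu: "Y u t = 0" for t
  proof -
    have "(\<lambda>k. (py k * cc A u k u) * t^k) = (\<lambda>k. 0)"
    proof
      fix k
    show "(py k * cc A u k u) * t^k = 0"
    proof (cases "even k")
      case True then show ?thesis by (simp add: py_even)
    next
      case False then show ?thesis using bip_odd[OF S False] by (simp add: cc_def)
    qed
    qed
    then show ?thesis unfolding Y_def Ser_def by simp
  qed
  have cm: "cmod (transition A t $ u $ u) = \<bar>X u t\<bar>" for t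
    unfolding transition_eq X_def[symmetric] Y_def[symmetric] Yu by (simp add: complex_norm)
  from sed obtain C where C: "0 < C" "C \<le> (INF t\<in>{0<..}. cmod (transition A t $ u $ u))"
    unfolding sedentary_def by blast
  have Cle: "C \<le> \<bar>X u t\<bar>" if "t > 0" for t
  proof -
    have "(INF t\<in>{0<..}. cmod (transition A t $ u $ u)) \<le> cmod (transition A t $ u $ u)"
      by (rule cINF_lower) (auto intro: bdd_belowI[where m=0] simp: that)
    then show ?thesis using C cm[of t] by simp
  qed
  have contX: "isCont (X u) t" for t using dX by (rule DERIV_isCont)
  have pos: "X u t > 0" if t0: "t \<ge> 0" for t
  proof (rule ccontr)
    assume "\<not> X u t > 0"
    then have "X u t \<le> 0" by simp
    moreover have "t \<noteq> 0" using \<open>\<not> X u t > 0\<close> X0[of u] by auto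
    ultimately obtain x where x: "0 \<le> x" "x \<le> t" "X u x = 0"
      using IVT2[of "X u" t 0 0] X0[of u] t0 contX by auto
    have "x \<noteq> 0" using x X0[of u] by auto
    then have "C \<le> \<bar>X u x\<bar>" using x by (intro Cle) auto
    then show False using x C by simp
  qed
  from assms(4) have "invertible A" by (simp add: invertible_det_nz)
  then obtain Ai where Ai: "Ai ** A = mat 1" by (auto simp: invertible_left_inverse)
  define g where "g t = (\<Sum>v\<in>UNIV. Ai$u$v * Y v t)" for t
  define h where "h t = (\<Sum>v\<in>UNIV. (Ai ** Ai)$u$v * ((if v = u then 1 else 0) - X v t))" for t
  have dg: "(g has_field_derivative X u t) (at t)" for t
  proof -
    have "(g has_field_derivative (\<Sum>v\<in>UNIV. Ai$u$v * (\<Sum>w\<in>UNIV. A$v$w * X w t))) (at t)"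
      unfolding g_def[abs_def] by (intro DERIV_sum DERIV_cmult dY)
    also have "(\<Sum>v\<in>UNIV. Ai$u$v * (\<Sum>w\<in>UNIV. A$v$w * X w t)) = X u t"
    proof -
      have "\<And>w. (mat 1 :: real^'n^'n)$u$w * X w t = (if u = w then X w t else 0)" by (simp add: mat_def)
      then show ?thesis unfolding sum_swap_mat Ai by simp
    qed
    finally show ?thesis .
  qed
  have dh: "(h has_field_derivative g t) (at t)" for t
  proof -
    have "(h has_field_derivative (\<Sum>v\<in>UNIV. (Ai ** Ai)$u$v * (0 - (- (\<Sum>w\<in>UNIV. A$v$w * Y w t))))) (at t)"
      unfolding h_def[abs_def] by (intro DERIV_sum DERIV_cmult DERIV_diff DERIV_const dX)
    also have "(\<Sum>v\<in>UNIV. (Ai ** Ai)$u$v * (0 - (- (\<Sum>w\<in>UNIV. A$v$w * Y w t)))) = g t"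
      unfolding diff_0 minus_minus sum_swap_mat g_def
      by (simp add: matrix_mul_assoc[symmetric] Ai matrix_mul_rid)
    finally show ?thesis .
  qed
  have g0: "g 0 = 0" unfolding g_def Y0 by simp
  have g1: "g 1 > 0"
  proof -
    obtain z where z: "0 < z" "z < 1" "g 1 - g 0 = (1 - 0) * X u z"
      using MVT2[of 0 1 g "X u"] dg by auto
    then show ?thesis using g0 pos[of z] by simp
  qed
  have gmono: "g t \<ge> g 1" if "t \<ge> 1" for t
  proof (cases "t = 1")
    case False
    then have "1 < t" using that by simp
    then obtain z where z: "1 < z" "z < t" "g t - g 1 = (t - 1) * X u z"
      using MVT2[of 1 t g "X u"] dg by auto
    have "(t - 1) * X u z \<ge> 0" using pos[of z] z \<open>1 < t\<close> by (intro mult_nonneg_nonneg) auto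
    then show ?thesis using z by linarith
  qed simp
  have hgrow: "h t \<ge> h 1 + (t - 1) * g 1" if t1: "t > 1" for t
  proof -
    obtain z where z: "1 < z" "z < t" "h t - h 1 = (t - 1) * g z"
      using MVT2[of 1 t h g] dh t1 by auto
    have "(t - 1) * g 1 \<le> (t - 1) * g z" using gmono[of z] z t1 by (intro mult_left_mono) auto
    then show ?thesis using z by linarith
  qed
  define K where "K = (\<Sum>v\<in>UNIV. \<bar>(Ai ** Ai)$u$v\<bar> * 2)"
  have hb: "h t \<le> K" for t
  proof -
    have "h t \<le> \<bar>h t\<bar>" by simp
    also have "\<dots> \<le> (\<Sum>v\<in>UNIV. \<bar>(Ai ** Ai)$u$v * ((if v = u then 1 else 0) - X v t)\<bar>)"
      unfolding h_def by (rule sum_abs)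
    also have "\<dots> \<le> K" unfolding K_def abs_mult
    proof (intro sum_mono mult_left_mono)
      fix v show "\<bar>(if v = u then 1 else 0) - X v t\<bar> \<le> (2::real)" using X1[of v t] by auto
    qed simp
    finally show ?thesis .
  qed
  define t where "t = 1 + (\<bar>K\<bar> + \<bar>h 1\<bar> + 1) / g 1"
  have t1: "t > 1" unfolding t_def using g1 by (simp add: add_pos_nonneg)
  have "(t - 1) * g 1 = \<bar>K\<bar> + \<bar>h 1\<bar> + 1" unfolding t_def using g1 by simp
  then have "h t \<ge> h 1 + \<bar>K\<bar> + \<bar>h 1\<bar> + 1" using hgrow[OF t1] by simp
  then show False using hb[of t] by linarith
qed


end
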